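(* Let $n\ge2$, $p\ge1$, $B\ge1$, $k\in\{1,\dots,p\}$, and consider $\hat S^{\mathrm{CPSS}}_{n,\tau}$ and $p_{k,\lfloor n/2\rfloor}$ as described in the context. (i) If $\tau\in(\frac12,1]$, then $\mathbb{P}(k\in\hat S^{\mathrm{CPSS}}_{n,\tau})\le\frac{1}{2\tau-1}p_{k,\lfloor n/2\rfloor}^2$. (ii) If $\tau\in[0,\frac12)$, then $\mathbb{P}(k\notin\hat S^{\mathrm{CPSS}}_{n,\tau})\le\frac{1}{1-2\tau}(1-p_{k,\lfloor n/2\rfloor})^2$.
   Context: Let $Z_1,\dots,Z_n$ be i.i.d. random elements. A variable selection procedure is a family of statistics $\hat S_m=\hat S_m(Z_1,\dots,Z_m)$, $m\ge1$, taking values in the subsets of $\{1,\dots,p\}$. For $A=\{i_1<\dots<i_{|A|}\}\subseteq\{1,\dots,n\}$ write $\hat S(A):=\hat S_{|A|}(Z_{i_1},\dots,Z_{i_{|A|}})$, and let $p_{k,m}:=\mathbb{P}(k\in\hat S_m(Z_1,\dots,Z_m))$. Let $\{(A_{2j-1},A_{2j}):j=1,\dots,B\}$ be randomly chosen pairs of subsets of $\{1,\dots,n\}$ of size $\lfloor n/2\rfloor$ with $A_{2j-1}\cap A_{2j}=\emptyset$, the pairs independent of each other and of the data. Define $\hat\Pi_B(k):=\frac1{2B}\sum_{j=1}^{2B}\mathbb{1}_{\{k\in\hat S(A_j)\}}$ and $\hat S^{\mathrm{CPSS}}_{n,\tau}:=\{k:\hat\Pi_B(k)\ge\tau\}$.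 *)

theory Defs
  imports "HOL-Probability.Probability"
begin

abbreviation sample_space :: "'z measure \<Rightarrow> nat \<Rightarrow> (nat \<Rightarrow> 'z) measure" where
  "sample_space D m \<equiv> PiM {1..m} (\<lambda>_. D)"

definition subsample :: "(nat \<Rightarrow> 'z) \<Rightarrow> nat set \<Rightarrow> (nat \<Rightarrow> 'z)" where
  "subsample z A = (\<lambda>i\<in>{1..card A}. z (sorted_list_of_set A ! (i - 1)))"

definition S_hat :: "(nat \<Rightarrow> (nat \<Rightarrow> 'z) \<Rightarrow> nat set) \<Rightarrow> (nat \<Rightarrow> 'z) \<Rightarrow> nat set \<Rightarrow> nat set" where
  "S_hat S z A = S (card A) (subsample z A)"

definition sel_prob :: "'z measure \<Rightarrow> (nat \<Rightarrow> (nat \<Rightarrow> 'z) \<Rightarrow> nat set) \<Rightarrow> nat \<Rightarrow> nat \<Rightarrow> real" where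
  "sel_prob D S k m = measure (sample_space D m) {x \<in> space (sample_space D m). k \<in> S m x}"

text \<open>Pi_hat_B(k) = 1/(2B) sum_{j=1}^{2B} 1{k \<in> S_hat(A_j)}, where pair j is
  a j = (A_{2j-1}, A_{2j}).\<close>
definition Pi_hat :: "(nat \<Rightarrow> (nat \<Rightarrow> 'z) \<Rightarrow> nat set) \<Rightarrow> nat \<Rightarrow> (nat \<Rightarrow> 'z) \<Rightarrow> (nat \<Rightarrow> nat set \<times> nat set) \<Rightarrow> nat \<Rightarrow> real" where
  "Pi_hat S B z a k = (\<Sum>j\<in>{1..B}. of_bool (k \<in> S_hat S z (fst (a j))) + of_bool (k \<in> S_hat S z (snd (a j)))) / (2 * real B)"

definition CPSS :: "(nat \<Rightarrow> (nat \<Rightarrow> 'z) \<Rightarrow> nat set) \<Rightarrow> nat \<Rightarrow> real \<Rightarrow> (nat \<Rightarrow> 'z) \<Rightarrow> (nat \<Rightarrow> nat set \<times> nat set) \<Rightarrow> nat set" where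
  "CPSS S B \<tau> z a = {k. Pi_hat S B z a k \<ge> \<tau>}"

abbreviation pairs_law :: "nat \<Rightarrow> (nat \<Rightarrow> (nat set \<times> nat set) pmf) \<Rightarrow> (nat \<Rightarrow> nat set \<times> nat set) pmf" where
  "pairs_law B Q \<equiv> Pi_pmf {1..B} ({}, {}) Q"

text \<open>Probability of an event about the CPSS output, over data and independent
  random pairs (Fubini: average over the pairs of the data probability).\<close>
definition CPSS_prob :: "'z measure \<Rightarrow> nat \<Rightarrow> nat \<Rightarrow> (nat \<Rightarrow> (nat set \<times> nat set) pmf) \<Rightarrow>
    (nat \<Rightarrow> (nat \<Rightarrow> 'z) \<Rightarrow> nat set) \<Rightarrow> real \<Rightarrow> (nat set \<Rightarrow> bool) \<Rightarrow> real" where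
  "CPSS_prob D n B Q S \<tau> E =
     measure_pmf.expectation (pairs_law B Q)
       (\<lambda>a. measure (sample_space D n) {z \<in> space (sample_space D n). E (CPSS S B \<tau> z a)})"

definition valid_pair :: "nat \<Rightarrow> nat set \<times> nat set \<Rightarrow> bool" where
  "valid_pair n P \<longleftrightarrow> fst P \<subseteq> {1..n} \<and> snd P \<subseteq> {1..n} \<and>
     card (fst P) = n div 2 \<and> card (snd P) = n div 2 \<and> fst P \<inter> snd P = {}"

end

theory Submission imports Defs begin

lemma sub_f:
  assumes "finite A"
  shows "inj_on (\<lambda>i. sorted_list_of_set A ! (i - 1)) {1..card A}"
    and "(\<lambda>i. sorted_list_of_set A ! (i - 1)) \<in> {1..card A} \<rightarrow> A"
proof -
  have d: "distinct (sorted_list_of_set A)" by simp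
  have l: "length (sorted_list_of_set A) = card A" by simp
  show "inj_on (\<lambda>i. sorted_list_of_set A ! (i - 1)) {1..card A}"
  proof (rule inj_onI)
    fix i j assume "i \<in> {1..card A}" "j \<in> {1..card A}"
      "sorted_list_of_set A ! (i - 1) = sorted_list_of_set A ! (j - 1)"
    moreover have "i - 1 = j - 1" using calculation nth_eq_iff_index_eq[OF d, of "i-1" "j-1"] l by auto
    ultimately show "i = j" by auto
  qed
  show "(\<lambda>i. sorted_list_of_set A ! (i - 1)) \<in> {1..card A} \<rightarrow> A"
  proof
    fix i assume "i \<in> {1..card A}"
    then have "sorted_list_of_set A ! (i - 1) \<in> set (sorted_list_of_set A)"
      using l by (intro nth_mem) auto
    then show "sorted_list_of_set A ! (i - 1) \<in> A" using assms by simp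
  qed
qed

lemma comp_meas: "j \<in> {1..n} \<Longrightarrow> (\<lambda>x. x j) \<in> measurable (sample_space D n) D"
  by (rule measurable_component_singleton)

lemma sub_meas:
  assumes "A \<subseteq> {1..n}"
  shows "(\<lambda>z. subsample z A) \<in> measurable (sample_space D n) (sample_space D (card A))"
proof -
  have fin: "finite A" using assms finite_subset by blast
  show ?thesis unfolding subsample_def
  proof (rule measurable_restrict)
    fix i assume "i \<in> {1..card A}"
    then have "sorted_list_of_set A ! (i - 1) \<in> {1..n}" using sub_f(2)[OF fin] assms by blast
    then show "(\<lambda>z. z (sorted_list_of_set A ! (i - 1))) \<in> measurable (sample_space D n) D"
      by (rule comp_meas)
  qed
qed

lemma sub_distr:
  assumes "prob_space D" "A \<subseteq> {1..n}"
  shows "distr (sample_space D n) (sample_space D (card A)) (\<lambda>z. subsample z A) = sample_space D (card A)"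
proof -
  have fin: "finite A" using assms finite_subset by blast
  have "distr (sample_space D n) (\<Pi>\<^sub>M i\<in>{1..card A}. (\<lambda>_. D) (sorted_list_of_set A ! (i - 1)))
     (\<lambda>\<omega>. \<lambda>i\<in>{1..card A}. \<omega> (sorted_list_of_set A ! (i - 1))) =
     (\<Pi>\<^sub>M i\<in>{1..card A}. (\<lambda>_. D) (sorted_list_of_set A ! (i - 1)))"
    apply (rule distr_PiM_reindex)
    using assms sub_f[OF fin] by auto
  then show ?thesis by (simp add: subsample_def[abs_def])
qed

lemma coord_indep:
  assumes D: "prob_space D" and n: "n \<ge> 1"
  shows "prob_space.indep_vars (sample_space D n) (\<lambda>_. D)
           (\<lambda>i x. x (if i \<in> {1..n} then i else 1)) {1..n}"
proof -
  interpret P: prob_space "sample_space D n"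
    using D by (intro prob_space_PiM) auto
  have rv: "\<And>i. (\<lambda>x. x (if i \<in> {1..n} then i else 1)) \<in> measurable (sample_space D n) D"
  proof -
    fix i
    have "(if i \<in> {1..n} then i else 1) \<in> {1..n}" using n by auto
    then show "(\<lambda>x. x (if i \<in> {1..n} then i else 1)) \<in> measurable (sample_space D n) D"
      by (rule comp_meas)
  qed
  have e1: "distr (sample_space D n) (\<Pi>\<^sub>M i\<in>{1..n}. D)
        (\<lambda>x. \<lambda>i\<in>{1..n}. x (if i \<in> {1..n} then i else 1)) = sample_space D n"
  proof -
    have "distr (sample_space D n) (\<Pi>\<^sub>M i\<in>{1..n}. D)
        (\<lambda>x. \<lambda>i\<in>{1..n}. x (if i \<in> {1..n} then i else 1)) =
          distr (sample_space D n) (\<Pi>\<^sub>M i\<in>{1..n}. D) (\<lambda>x. x)"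
      by (rule distr_cong) (auto simp: space_PiM PiE_def extensional_def fun_eq_iff)
    then show ?thesis by simp
  qed
  have e2: "(\<Pi>\<^sub>M i\<in>{1..n}. distr (sample_space D n) D (\<lambda>x. x (if i \<in> {1..n} then i else 1)))
      = sample_space D n"
    by (rule PiM_cong) (auto intro!: distr_PiM_component D)
  show ?thesis
    using n by (subst P.indep_vars_iff_distr_eq_PiM[OF _ rv]) (auto simp only: e1 e2, simp)
qed

lemma single_prob:
  assumes D: "prob_space D" and A: "A \<subseteq> {1..n}"
    and meas: "\<And>m i. {x \<in> space (sample_space D m). i \<in> S m x} \<in> sets (sample_space D m)"
  shows "measure (sample_space D n) {z \<in> space (sample_space D n). k \<in> S (card A) (subsample z A)}
     = sel_prob D S k (card A)"
proof -
  let ?X = "{x \<in> space (sample_space D (card A)). k \<in> S (card A) x}"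
  have g: "(\<lambda>z. subsample z A) \<in> measurable (sample_space D n) (sample_space D (card A))"
    by (rule sub_meas[OF A])
  have "sel_prob D S k (card A) = measure (distr (sample_space D n) (sample_space D (card A)) (\<lambda>z. subsample z A)) ?X"
    unfolding sel_prob_def sub_distr[OF D A] ..
  also have "\<dots> = measure (sample_space D n) ((\<lambda>z. subsample z A) -` ?X \<inter> space (sample_space D n))"
    by (rule measure_distr[OF g meas])
  also have "(\<lambda>z. subsample z A) -` ?X \<inter> space (sample_space D n) =
     {z \<in> space (sample_space D n). k \<in> S (card A) (subsample z A)}"
    using measurable_space[OF g] by auto
  finally show ?thesis by simp
qed

lemma reidx_meas:
  assumes "finite A"
  shows "(\<lambda>y. \<lambda>i\<in>{1..card A}. y (sorted_list_of_set A ! (i - 1))) \<in> measurable (PiM A (\<lambda>_. D)) (sample_space D (card A))"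
proof (rule measurable_restrict)
  fix i assume "i \<in> {1..card A}"
  then have "sorted_list_of_set A ! (i - 1) \<in> A" using sub_f(2)[OF assms] by blast
  then show "(\<lambda>y. y (sorted_list_of_set A ! (i - 1))) \<in> measurable (PiM A (\<lambda>_. D)) D"
    by (rule measurable_component_singleton)
qed

lemma pair_prob:
  assumes D: "prob_space D" and n: "n \<ge> 1" and A1: "A1 \<subseteq> {1..n}" and A2: "A2 \<subseteq> {1..n}"
    and dis: "A1 \<inter> A2 = {}" and c1: "card A1 = m" and c2: "card A2 = m"
    and meas: "\<And>m i. {x \<in> space (sample_space D m). i \<in> S m x} \<in> sets (sample_space D m)"
  shows "measure (sample_space D n) {z \<in> space (sample_space D n).
      k \<in> S m (subsample z A1) \<and> k \<in> S m (subsample z A2)} = (sel_prob D S k m)^2"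
proof -
  interpret P: prob_space "sample_space D n"
    using D by (intro prob_space_PiM) auto
  let ?X = "\<lambda>i x. x (if i \<in> {1..n} then i else 1)"
  have f1: "finite A1" and f2: "finite A2" using A1 A2 finite_subset by auto
  have iv: "P.indep_var (PiM A1 (\<lambda>_. D)) (\<lambda>\<omega>. restrict (\<lambda>i. ?X i \<omega>) A1)
                        (PiM A2 (\<lambda>_. D)) (\<lambda>\<omega>. restrict (\<lambda>i. ?X i \<omega>) A2)"
    by (rule P.indep_var_restrict[OF coord_indep[OF D n] dis A1 A2])
  have iv2: "P.indep_var (sample_space D m) ((\<lambda>y. \<lambda>i\<in>{1..card A1}. y (sorted_list_of_set A1 ! (i - 1))) \<circ> (\<lambda>\<omega>. restrict (\<lambda>i. ?X i \<omega>) A1))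
       (sample_space D m) ((\<lambda>y. \<lambda>i\<in>{1..card A2}. y (sorted_list_of_set A2 ! (i - 1))) \<circ> (\<lambda>\<omega>. restrict (\<lambda>i. ?X i \<omega>) A2))"
    using P.indep_var_compose[OF iv reidx_meas[OF f1] reidx_meas[OF f2]] c1 c2 by simp
  have e1: "((\<lambda>y. \<lambda>i\<in>{1..card A1}. y (sorted_list_of_set A1 ! (i - 1))) \<circ> (\<lambda>\<omega>. restrict (\<lambda>i. ?X i \<omega>) A1))
      = (\<lambda>z. subsample z A1)"
    using sub_f(2)[OF f1] A1 by (auto simp: fun_eq_iff subsample_def Pi_iff subset_iff)
  have e2: "((\<lambda>y. \<lambda>i\<in>{1..card A2}. y (sorted_list_of_set A2 ! (i - 1))) \<circ> (\<lambda>\<omega>. restrict (\<lambda>i. ?X i \<omega>) A2))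
      = (\<lambda>z. subsample z A2)"
    using sub_f(2)[OF f2] A2 by (auto simp: fun_eq_iff subsample_def Pi_iff subset_iff)
  have iv3: "P.indep_var (sample_space D m) (\<lambda>z. subsample z A1) (sample_space D m) (\<lambda>z. subsample z A2)"
    using iv2 unfolding e1 e2 .
  let ?E = "{x \<in> space (sample_space D m). k \<in> S m x}"
  have g1: "(\<lambda>z. subsample z A1) \<in> measurable (sample_space D n) (sample_space D m)"
    using sub_meas[OF A1] c1 by simp
  have g2: "(\<lambda>z. subsample z A2) \<in> measurable (sample_space D n) (sample_space D m)"
    using sub_meas[OF A2] c2 by simp
  have "P.prob ((\<lambda>x. (subsample x A1, subsample x A2)) -` (?E \<times> ?E) \<inter> space (sample_space D n))
     = P.prob ((\<lambda>z. subsample z A1) -` ?E \<inter> space (sample_space D n)) *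
       P.prob ((\<lambda>z. subsample z A2) -` ?E \<inter> space (sample_space D n))"
    by (rule P.indep_varD[OF iv3 meas meas])
  also have "(\<lambda>x. (subsample x A1, subsample x A2)) -` (?E \<times> ?E) \<inter> space (sample_space D n)
     = {z \<in> space (sample_space D n). k \<in> S m (subsample z A1) \<and> k \<in> S m (subsample z A2)}"
    using measurable_space[OF g1] measurable_space[OF g2] by auto
  also have "(\<lambda>z. subsample z A1) -` ?E \<inter> space (sample_space D n) =
      {z \<in> space (sample_space D n). k \<in> S (card A1) (subsample z A1)}"
    using measurable_space[OF g1] c1 by auto
  also have "(\<lambda>z. subsample z A2) -` ?E \<inter> space (sample_space D n) =
      {z \<in> space (sample_space D n). k \<in> S (card A2) (subsample z A2)}"
    using measurable_space[OF g2] c2 by auto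
  finally show ?thesis
    using single_prob[OF D A1 meas, where k=k] single_prob[OF D A2 meas, where k=k] c1 c2
    by (simp add: power2_eq_square)
qed

lemma fixed_a:
  assumes D: "prob_space D" and n: "n \<ge> 2" and B: "B \<ge> 1"
    and meas: "\<And>m i. {x \<in> space (sample_space D m). i \<in> S m x} \<in> sets (sample_space D m)"
    and val: "\<And>j. j \<in> {1..B} \<Longrightarrow> valid_pair n (a j)"
  shows "1/2 < \<tau> \<Longrightarrow> measure (sample_space D n) {z \<in> space (sample_space D n). k \<in> CPSS S B \<tau> z a}
           \<le> 1 / (2 * \<tau> - 1) * (sel_prob D S k (n div 2))\<^sup>2"
    and "\<tau> < 1/2 \<Longrightarrow> measure (sample_space D n) {z \<in> space (sample_space D n). k \<notin> CPSS S B \<tau> z a}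
           \<le> 1 / (1 - 2 * \<tau>) * (1 - sel_prob D S k (n div 2))\<^sup>2"
proof -
  let ?M = "sample_space D n"
  let ?m = "n div 2"
  let ?p = "sel_prob D S k ?m"
  interpret P: prob_space ?M
    using D by (intro prob_space_PiM) auto
  define U where "U j = {z \<in> space ?M. k \<in> S_hat S z (fst (a j))}" for j
  define V where "V j = {z \<in> space ?M. k \<in> S_hat S z (snd (a j))}" for j
  have sub1: "fst (a j) \<subseteq> {1..n}" "card (fst (a j)) = ?m"
   and sub2: "snd (a j) \<subseteq> {1..n}" "card (snd (a j)) = ?m"
   and dis: "fst (a j) \<inter> snd (a j) = {}" if "j \<in> {1..B}" for j
    using val[OF that] unfolding valid_pair_def by auto
  have Us: "U j \<in> sets ?M" if "j \<in> {1..B}" for j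
  proof -
    have g: "(\<lambda>z. subsample z (fst (a j))) \<in> measurable ?M (sample_space D ?m)"
      using sub_meas[OF sub1(1)[OF that]] sub1(2)[OF that] by simp
    have "U j = (\<lambda>z. subsample z (fst (a j))) -` {x \<in> space (sample_space D ?m). k \<in> S ?m x} \<inter> space ?M"
      using measurable_space[OF g] sub1(2)[OF that] by (auto simp: U_def S_hat_def)
    then show ?thesis using measurable_sets[OF g meas] by simp
  qed
  have Vs: "V j \<in> sets ?M" if "j \<in> {1..B}" for j
  proof -
    have g: "(\<lambda>z. subsample z (snd (a j))) \<in> measurable ?M (sample_space D ?m)"
      using sub_meas[OF sub2(1)[OF that]] sub2(2)[OF that] by simp
    have "V j = (\<lambda>z. subsample z (snd (a j))) -` {x \<in> space (sample_space D ?m). k \<in> S ?m x} \<inter> space ?M"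
      using measurable_space[OF g] sub2(2)[OF that] by (auto simp: V_def S_hat_def)
    then show ?thesis using measurable_sets[OF g meas] by simp
  qed
  have UV: "P.prob (U j \<inter> V j) = ?p\<^sup>2" if "j \<in> {1..B}" for j
  proof -
    have "U j \<inter> V j = {z \<in> space ?M. k \<in> S ?m (subsample z (fst (a j))) \<and> k \<in> S ?m (subsample z (snd (a j)))}"
      using sub1(2)[OF that] sub2(2)[OF that] by (auto simp: U_def V_def S_hat_def)
    then show ?thesis
      using pair_prob[OF D _ sub1(1)[OF that] sub2(1)[OF that] dis[OF that] sub1(2)[OF that] sub2(2)[OF that] meas, where k=k] n
      by simp
  qed
  have Up: "P.prob (U j) = ?p" if "j \<in> {1..B}" for j
    using single_prob[OF D sub1(1)[OF that] meas, where k=k] sub1(2)[OF that]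
    by (simp add: U_def S_hat_def)
  have Vp: "P.prob (V j) = ?p" if "j \<in> {1..B}" for j
    using single_prob[OF D sub2(1)[OF that] meas, where k=k] sub2(2)[OF that]
    by (simp add: V_def S_hat_def)
  have NN: "P.prob (space ?M - (U j \<union> V j)) = (1 - ?p)\<^sup>2" if "j \<in> {1..B}" for j
  proof -
    have "P.prob (space ?M - (U j \<union> V j)) = 1 - P.prob (U j \<union> V j)"
      using Us[OF that] Vs[OF that] by (intro P.prob_compl) auto
    also have "P.prob (U j \<union> V j) = P.prob (U j) + P.prob (V j) - P.prob (U j \<inter> V j)"
      by (rule measure_Un3; unfold P.fmeasurable_eq_sets; rule Us Vs; rule that)
    finally show ?thesis using UV[OF that] Up[OF that] Vp[OF that] by (simp add: power2_eq_square algebra_simps)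
  qed
  define PI where "PI z = (\<Sum>j\<in>{1..B}. indicator (U j) z + indicator (V j) z) / (2 * real B)" for z :: "nat \<Rightarrow> 'a"
  have PIeq: "Pi_hat S B z a k = PI z" if "z \<in> space ?M" for z
    unfolding Pi_hat_def PI_def using that by (intro arg_cong2[where f="(/)"] sum.cong) (auto simp: U_def V_def indicator_def)
  have PIm: "PI \<in> borel_measurable ?M"
    unfolding PI_def using Us Vs by (intro borel_measurable_divide borel_measurable_sum borel_measurable_add borel_measurable_indicator) auto
  have Bpos: "real B > 0" using B by simp
  show "1/2 < \<tau> \<Longrightarrow> measure ?M {z \<in> space ?M. k \<in> CPSS S B \<tau> z a}
           \<le> 1 / (2 * \<tau> - 1) * ?p\<^sup>2"
  proof -
    assume t: "1/2 < \<tau>"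
    define G where "G = {z \<in> space ?M. \<tau> \<le> PI z}"
    have Geq: "{z \<in> space ?M. k \<in> CPSS S B \<tau> z a} = G"
      using PIeq by (auto simp: G_def CPSS_def)
    have Gs: "G \<in> sets ?M" unfolding G_def using PIm by measurable
    have c: "2 * \<tau> - 1 > 0" using t by simp
    have pw: "indicator G z \<le> (\<Sum>j\<in>{1..B}. indicator (U j \<inter> V j) z) / (real B * (2 * \<tau> - 1))"
      if z: "z \<in> space ?M" for z
    proof (cases "z \<in> G")
      case True
      then have "\<tau> \<le> PI z" by (simp add: G_def)
      then have "2 * real B * \<tau> \<le> (\<Sum>j\<in>{1..B}. indicator (U j) z + indicator (V j) z)"
        using Bpos by (simp add: PI_def field_simps)
      also have "\<dots> \<le> (\<Sum>j\<in>{1..B}. 1 + indicator (U j \<inter> V j) z)"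
        by (intro sum_mono) (auto simp: indicator_def)
      also have "\<dots> = real B + (\<Sum>j\<in>{1..B}. indicator (U j \<inter> V j) z)"
        by (simp add: sum.distrib)
      finally have "real B * (2 * \<tau> - 1) \<le> (\<Sum>j\<in>{1..B}. indicator (U j \<inter> V j) z)"
        by (simp add: algebra_simps)
      then show ?thesis using True Bpos c by (simp add: field_simps)
    next
      case False
      then show ?thesis using Bpos c by (auto intro!: divide_nonneg_pos sum_nonneg)
    qed
    have intj: "integrable ?M (indicator (U j \<inter> V j) :: _ \<Rightarrow> real)" if j: "j \<in> {1..B}" for j
    proof -
      have "U j \<inter> V j \<in> sets ?M" using Us[OF j] Vs[OF j] by blast
      then show ?thesis
        by (rule integrable_real_indicator) (metis P.emeasure_finite less_top infinity_ennreal_def)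
    qed
    have intG: "integrable ?M (indicator G :: _ \<Rightarrow> real)"
      by (rule integrable_real_indicator[OF Gs]) (metis P.emeasure_finite less_top infinity_ennreal_def)
    have intS: "integrable ?M (\<lambda>z. (\<Sum>j\<in>{1..B}. indicator (U j \<inter> V j) z) / (real B * (2 * \<tau> - 1)))"
      by (rule integrable_divide_zero[OF Bochner_Integration.integrable_sum[OF intj]])
    have "measure ?M G = integral\<^sup>L ?M (indicator G)"
      using Gs by simp
    also have "\<dots> \<le> integral\<^sup>L ?M (\<lambda>z. (\<Sum>j\<in>{1..B}. indicator (U j \<inter> V j) z) / (real B * (2 * \<tau> - 1)))"
      by (rule integral_mono[OF intG intS pw])
    also have "\<dots> = (\<Sum>j\<in>{1..B}. integral\<^sup>L ?M (indicator (U j \<inter> V j))) / (real B * (2 * \<tau> - 1))"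
      by (simp only: integral_divide_zero Bochner_Integration.integral_sum[OF intj])
    also have "\<dots> = (\<Sum>j\<in>{1..B}. P.prob (U j \<inter> V j)) / (real B * (2 * \<tau> - 1))"
    proof -
      have "integral\<^sup>L ?M (indicator (U j \<inter> V j)) = P.prob (U j \<inter> V j)" if j: "j \<in> {1..B}" for j
      proof -
        have "U j \<inter> V j \<in> sets ?M" using Us[OF j] Vs[OF j] by blast
        then have "U j \<inter> V j \<inter> space ?M = U j \<inter> V j" using sets.sets_into_space by blast
        then show ?thesis by (metis Bochner_Integration.integral_indicator)
      qed
      then have "(\<Sum>j\<in>{1..B}. integral\<^sup>L ?M (indicator (U j \<inter> V j))) = (\<Sum>j\<in>{1..B}. P.prob (U j \<inter> V j))"
        by (rule sum.cong[OF refl])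
      then show ?thesis by (rule arg_cong[where f="\<lambda>x. x / (real B * (2 * \<tau> - 1))"])
    qed
    also have "\<dots> = real B * ?p\<^sup>2 / (real B * (2 * \<tau> - 1))"
      using UV by simp
    also have "\<dots> = 1 / (2 * \<tau> - 1) * ?p\<^sup>2"
      using Bpos by simp
    finally show ?thesis using Geq by simp
  qed
  show "\<tau> < 1/2 \<Longrightarrow> measure ?M {z \<in> space ?M. k \<notin> CPSS S B \<tau> z a}
           \<le> 1 / (1 - 2 * \<tau>) * (1 - ?p)\<^sup>2"
  proof -
    assume t: "\<tau> < 1/2"
    define G where "G = {z \<in> space ?M. PI z < \<tau>}"
    have Geq: "{z \<in> space ?M. k \<notin> CPSS S B \<tau> z a} = G"
      using PIeq by (auto simp: G_def CPSS_def)
    have Gs: "G \<in> sets ?M" unfolding G_def using PIm by measurable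
    let ?N = "\<lambda>j. space ?M - (U j \<union> V j)"
    have Ns: "?N j \<in> sets ?M" if "j \<in> {1..B}" for j using Us[OF that] Vs[OF that] by auto
    have c: "1 - 2 * \<tau> > 0" using t by simp
    have pw: "indicator G z \<le> (\<Sum>j\<in>{1..B}. indicator (?N j) z) / (real B * (1 - 2 * \<tau>))"
      if z: "z \<in> space ?M" for z
    proof (cases "z \<in> G")
      case True
      then have "PI z < \<tau>" by (simp add: G_def)
      then have "(\<Sum>j\<in>{1..B}. indicator (U j) z + indicator (V j) z) < 2 * real B * \<tau>"
        using Bpos by (simp add: PI_def field_simps)
      moreover have "(\<Sum>j\<in>{1..B}. 1 - indicator (?N j) z) \<le> (\<Sum>j\<in>{1..B}. indicator (U j) z + indicator (V j) z :: real)"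
        using z by (intro sum_mono) (auto simp: indicator_def)
      moreover have "(\<Sum>j\<in>{1..B}. 1 - indicator (?N j) z) = real B - (\<Sum>j\<in>{1..B}. indicator (?N j) z :: real)"
        by (simp add: sum_subtractf)
      ultimately have "real B * (1 - 2 * \<tau>) \<le> (\<Sum>j\<in>{1..B}. indicator (?N j) z)"
        by (simp add: algebra_simps)
      then show ?thesis using True Bpos c by (simp add: field_simps)
    next
      case False
      then show ?thesis using Bpos c by (auto intro!: divide_nonneg_pos sum_nonneg)
    qed
    have intj: "integrable ?M (indicator (?N j) :: _ \<Rightarrow> real)" if j: "j \<in> {1..B}" for j
    proof -
      have "?N j \<in> sets ?M" using Ns[OF j] by blast
      then show ?thesis
        by (rule integrable_real_indicator) (metis P.emeasure_finite less_top infinity_ennreal_def)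
    qed
    have intG: "integrable ?M (indicator G :: _ \<Rightarrow> real)"
      by (rule integrable_real_indicator[OF Gs]) (metis P.emeasure_finite less_top infinity_ennreal_def)
    have intS: "integrable ?M (\<lambda>z. (\<Sum>j\<in>{1..B}. indicator (?N j) z) / (real B * (1 - 2 * \<tau>)))"
      by (rule integrable_divide_zero[OF Bochner_Integration.integrable_sum[OF intj]])
    have "measure ?M G = integral\<^sup>L ?M (indicator G)"
      using Gs by simp
    also have "\<dots> \<le> integral\<^sup>L ?M (\<lambda>z. (\<Sum>j\<in>{1..B}. indicator (?N j) z) / (real B * (1 - 2 * \<tau>)))"
      by (rule integral_mono[OF intG intS pw])
    also have "\<dots> = (\<Sum>j\<in>{1..B}. integral\<^sup>L ?M (indicator (?N j))) / (real B * (1 - 2 * \<tau>))"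
      by (simp only: integral_divide_zero Bochner_Integration.integral_sum[OF intj])
    also have "\<dots> = (\<Sum>j\<in>{1..B}. P.prob (?N j)) / (real B * (1 - 2 * \<tau>))"
    proof -
      have "integral\<^sup>L ?M (indicator (?N j)) = P.prob (?N j)" if j: "j \<in> {1..B}" for j
      proof -
        have "?N j \<in> sets ?M" using Ns[OF j] by blast
        then have "?N j \<inter> space ?M = ?N j" using sets.sets_into_space by blast
        then show ?thesis by (metis Bochner_Integration.integral_indicator)
      qed
      then have "(\<Sum>j\<in>{1..B}. integral\<^sup>L ?M (indicator (?N j))) = (\<Sum>j\<in>{1..B}. P.prob (?N j))"
        by (rule sum.cong[OF refl])
      then show ?thesis by (rule arg_cong[where f="\<lambda>x. x / (real B * (1 - 2 * \<tau>))"])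
    qed
    also have "\<dots> = real B * (1 - ?p)\<^sup>2 / (real B * (1 - 2 * \<tau>))"
      using NN by simp
    also have "\<dots> = 1 / (1 - 2 * \<tau>) * (1 - ?p)\<^sup>2"
      using Bpos by simp
    finally show ?thesis using Geq by simp
  qed
qed

lemma pmf_bound:
  fixes f :: "'b \<Rightarrow> real"
  assumes "\<And>a. a \<in> set_pmf P \<Longrightarrow> f a \<le> c" and "\<And>a. 0 \<le> f a" "\<And>a. f a \<le> 1"
  shows "measure_pmf.expectation P f \<le> c"
proof -
  have i: "integrable (measure_pmf P) f"
    by (rule measure_pmf.integrable_const_bound[where B=1]) (auto simp: assms)
  have "measure_pmf.expectation P f \<le> measure_pmf.expectation P (\<lambda>_. c)"
    by (rule integral_mono_AE[OF i]) (auto simp: AE_measure_pmf_iff assms)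
  then show ?thesis by simp
qed

theorem lemma1:
  fixes D :: "'z measure" and S :: "nat \<Rightarrow> (nat \<Rightarrow> 'z) \<Rightarrow> nat set"
    and Q :: "nat \<Rightarrow> (nat set \<times> nat set) pmf"
    and n p B k :: nat and \<tau> :: real
  assumes "prob_space D"
    and "n \<ge> 2" and "p \<ge> 1" and "B \<ge> 1" and "k \<in> {1..p}"
    and "\<And>m x. S m x \<subseteq> {1..p}"
    and "\<And>m i. {x \<in> space (sample_space D m). i \<in> S m x} \<in> sets (sample_space D m)"
    and "\<And>j P. j \<in> {1..B} \<Longrightarrow> P \<in> set_pmf (Q j) \<Longrightarrow> valid_pair n P"
  shows "(1/2 < \<tau> \<and> \<tau> \<le> 1 \<longrightarrow>
           CPSS_prob D n B Q S \<tau> (\<lambda>T. k \<in> T)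
             \<le> 1 / (2 * \<tau> - 1) * (sel_prob D S k (n div 2))\<^sup>2)
       \<and> (0 \<le> \<tau> \<and> \<tau> < 1/2 \<longrightarrow>
           CPSS_prob D n B Q S \<tau> (\<lambda>T. k \<notin> T)
             \<le> 1 / (1 - 2 * \<tau>) * (1 - sel_prob D S k (n div 2))\<^sup>2)"
proof -
  interpret P: prob_space "sample_space D n"
    using assms(1) by (intro prob_space_PiM) auto
  have val: "valid_pair n (a j)" if "a \<in> set_pmf (pairs_law B Q)" "j \<in> {1..B}" for a j
  proof -
    have "a \<in> PiE_dflt {1..B} ({}, {}) (set_pmf \<circ> Q)"
      using that(1) set_Pi_pmf[of "{1..B}" "({}, {})" Q] by simp
    then have "a j \<in> set_pmf (Q j)" using that(2) by (auto simp: PiE_dflt_def)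
    then show ?thesis using assms(8)[OF that(2)] by blast
  qed
  have b0: "0 \<le> measure (sample_space D n) X" for X by simp
  have b1: "measure (sample_space D n) X \<le> 1" for X by (rule P.prob_le_1)
  show ?thesis
  proof (intro conjI impI)
    assume t: "1/2 < \<tau> \<and> \<tau> \<le> 1"
    show "CPSS_prob D n B Q S \<tau> (\<lambda>T. k \<in> T) \<le> 1 / (2 * \<tau> - 1) * (sel_prob D S k (n div 2))\<^sup>2"
      unfolding CPSS_prob_def
      by (rule pmf_bound[OF _ b0 b1], rule fixed_a(1)[OF assms(1,2,4,7)]) (use val t in auto)
  next
    assume t: "0 \<le> \<tau> \<and> \<tau> < 1/2"
    show "CPSS_prob D n B Q S \<tau> (\<lambda>T. k \<notin> T) \<le> 1 / (1 - 2 * \<tau>) * (1 - sel_prob D S k (n div 2))\<^sup>2"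
      unfolding CPSS_prob_def
      by (rule pmf_bound[OF _ b0 b1], rule fixed_a(2)[OF assms(1,2,4,7)]) (use val t in auto)
  qed
qed

end
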